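(* Let $\phi$ be an IPC formula disjunctive in the variable $x$. Then for every Heyting algebra $H$ and every valuation $v$ in $H$ of the variables of $\phi$ other than $x$, the monotone map $h\mapsto[\![\phi]\!]_{(v,h/x)}$ has a least fixed point, equal to the value under $v$ of $\big(\bigwedge_{\alpha\in\mathrm{Head}(\phi)}\alpha\big)\to\big(\bigvee_{\beta\in\mathrm{Side}(\phi)}\beta\big)$ (empty meet $=\top$, empty join $=\bot$).
   Context: A formula is disjunctive in $x$ if it is generated by the grammar $\phi ::= x \mid \alpha\to\phi \mid \beta\vee\phi \mid \phi\vee\phi$, where $\alpha,\beta$ range over IPC formulas not containing $x$ (disjunctions up to commutativity). $\mathrm{Head}(\phi)$ is the set of formulas $\alpha$ used in productions $\alpha\to\phi'$ in the parse of $\phi$; $\mathrm{Side}(\phi)$ is the set of formulas $\beta$ used in productions $\beta\vee\phi'$. $(v,h/x)$ extends $v$ by sending $x$ to $h$. *)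

theory Defs
  imports Main
begin

class heyting_algebra = bounded_lattice +
  fixes himp :: "'a \<Rightarrow> 'a \<Rightarrow> 'a"
  assumes himp_adj: "inf z x \<le> y \<longleftrightarrow> z \<le> himp x y"

datatype 'v fm =
    Var 'v
  | Bot
  | Top
  | Conj "'v fm" "'v fm"
  | Disj "'v fm" "'v fm"
  | Imp "'v fm" "'v fm"

primrec vars :: "'v fm \<Rightarrow> 'v set" where
  "vars (Var y) = {y}"
| "vars Bot = {}"
| "vars Top = {}"
| "vars (Conj a b) = vars a \<union> vars b"
| "vars (Disj a b) = vars a \<union> vars b"
| "vars (Imp a b) = vars a \<union> vars b"

primrec eval :: "('v \<Rightarrow> 'h::heyting_algebra) \<Rightarrow> 'v fm \<Rightarrow> 'h" where
  "eval v (Var y) = v y"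
| "eval v Bot = bot"
| "eval v Top = top"
| "eval v (Conj a b) = inf (eval v a) (eval v b)"
| "eval v (Disj a b) = sup (eval v a) (eval v b)"
| "eval v (Imp a b) = himp (eval v a) (eval v b)"

definition BigConj :: "'v fm list \<Rightarrow> 'v fm" where
  "BigConj as = foldr Conj as Top"

definition BigDisj :: "'v fm list \<Rightarrow> 'v fm" where
  "BigDisj bs = foldr Disj bs Bot"

text \<open>Parse trees of the grammar
  phi ::= x | alpha -> phi | beta \/ phi | phi \/ phi,
  with side disjunctions allowed in either order (disjunction up to commutativity).\<close>

datatype 'v dparse =
    DX
  | DImp "'v fm" "'v dparse"
  | DSideL "'v fm" "'v dparse"
  | DSideR "'v dparse" "'v fm"
  | DOr "'v dparse" "'v dparse"

primrec to_fm :: "'v \<Rightarrow> 'v dparse \<Rightarrow> 'v fm" where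
  "to_fm x DX = Var x"
| "to_fm x (DImp a p) = Imp a (to_fm x p)"
| "to_fm x (DSideL b p) = Disj b (to_fm x p)"
| "to_fm x (DSideR p b) = Disj (to_fm x p) b"
| "to_fm x (DOr p q) = Disj (to_fm x p) (to_fm x q)"

primrec wf_dparse :: "'v \<Rightarrow> 'v dparse \<Rightarrow> bool" where
  "wf_dparse x DX = True"
| "wf_dparse x (DImp a p) = (x \<notin> vars a \<and> wf_dparse x p)"
| "wf_dparse x (DSideL b p) = (x \<notin> vars b \<and> wf_dparse x p)"
| "wf_dparse x (DSideR p b) = (x \<notin> vars b \<and> wf_dparse x p)"
| "wf_dparse x (DOr p q) = (wf_dparse x p \<and> wf_dparse x q)"

definition disjunctive_in :: "'v \<Rightarrow> 'v fm \<Rightarrow> 'v dparse \<Rightarrow> bool" where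
  "disjunctive_in x \<phi> p \<longleftrightarrow> wf_dparse x p \<and> to_fm x p = \<phi>"

primrec head_list :: "'v dparse \<Rightarrow> 'v fm list" where
  "head_list DX = []"
| "head_list (DImp a p) = a # head_list p"
| "head_list (DSideL b p) = head_list p"
| "head_list (DSideR p b) = head_list p"
| "head_list (DOr p q) = head_list p @ head_list q"

primrec side_list :: "'v dparse \<Rightarrow> 'v fm list" where
  "side_list DX = []"
| "side_list (DImp a p) = side_list p"
| "side_list (DSideL b p) = b # side_list p"
| "side_list (DSideR p b) = b # side_list p"
| "side_list (DOr p q) = side_list p @ side_list q"

definition Head :: "'v dparse \<Rightarrow> 'v fm set" where
  "Head p = set (head_list p)"

definition Side :: "'v dparse \<Rightarrow> 'v fm set" where
  "Side p = set (side_list p)"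

end

theory Submission
  imports Defs
begin

context heyting_algebra
begin
lemma h_mp: "inf x (himp x y) \<le> y"
  using himp_adj[of "himp x y" x y] by (simp add: inf_commute)
lemma h_up: "y \<le> himp x y"
  using himp_adj[of y x y] by simp
lemma h_mono2: "y \<le> y' \<Longrightarrow> himp x y \<le> himp x y'"
  using himp_adj[of "himp x y" x y'] h_mp[of x y] by (simp add: inf_commute order_trans)
lemma h_anti1: "x \<le> x' \<Longrightarrow> himp x' y \<le> himp x y"
proof -
  assume "x \<le> x'"
  hence "inf (himp x' y) x \<le> inf x' (himp x' y)" by (metis inf_commute inf_mono order_refl)
  also have "\<dots> \<le> y" by (rule h_mp)
  finally show ?thesis using himp_adj by blast
qed
lemma h_curry: "himp (inf a b) c \<le> himp a (himp b c)"
proof -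
  have "inf (inf (himp (inf a b) c) a) b = inf (inf a b) (himp (inf a b) c)"
    by (metis inf_assoc inf_commute)
  also have "\<dots> \<le> c" by (rule h_mp)
  finally show ?thesis using himp_adj by blast
qed
lemma h_distrib: "inf x (sup y z) \<le> sup (inf x y) (inf x z)"
proof -
  let ?w = "sup (inf x y) (inf x z)"
  have "y \<le> himp x ?w" using himp_adj[of y x ?w] by (simp add: inf_commute le_supI1)
  moreover have "z \<le> himp x ?w" using himp_adj[of z x ?w] by (simp add: inf_commute le_supI2)
  ultimately have "sup y z \<le> himp x ?w" by simp
  thus ?thesis using himp_adj[of "sup y z" x ?w] by (simp add: inf_commute)
qed
end

lemma eval_upd: "x \<notin> vars a \<Longrightarrow> eval (v(x := h)) a = eval v a"
  by (induction a) auto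

lemma conj_app: "eval v (BigConj (l1 @ l2)) = inf (eval v (BigConj l1)) (eval v (BigConj l2))"
  by (induction l1) (auto simp: BigConj_def inf_assoc)
lemma disj_app: "eval v (BigDisj (l1 @ l2)) = sup (eval v (BigDisj l1)) (eval v (BigDisj l2))"
  by (induction l1) (auto simp: BigDisj_def sup_assoc)
lemma conj_cons: "eval v (BigConj (a # l)) = inf (eval v a) (eval v (BigConj l))"
  by (simp add: BigConj_def)
lemma disj_cons: "eval v (BigDisj (a # l)) = sup (eval v a) (eval v (BigDisj l))"
  by (simp add: BigDisj_def)

definition KP :: "'h::heyting_algebra \<Rightarrow> 'h \<Rightarrow> ('h \<Rightarrow> 'h) \<Rightarrow> bool" where
  "KP A B F \<longleftrightarrow> (\<forall>h h'. h \<le> h' \<longrightarrow> F h \<le> F h') \<and> (\<forall>h. h \<le> F h) \<and> (\<forall>h. B \<le> F h)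
     \<and> (\<forall>d q. F (himp d q) \<le> q \<longrightarrow> himp (inf d A) q \<le> q) \<and> (\<forall>h. inf A (F h) \<le> sup B h)"

lemma KP_X: "KP top bot (\<lambda>h. h)"
  unfolding KP_def using h_mp[of top] by (auto simp: inf_commute)

lemma KP_imp:
  assumes "KP A B F" shows "KP (inf a A) B (\<lambda>h. himp a (F h))"
proof -
  from assms have M: "\<And>h h'. h \<le> h' \<Longrightarrow> F h \<le> F h'" and I2: "\<And>h. h \<le> F h"
    and I3: "\<And>h. B \<le> F h" and I4: "\<And>d q. F (himp d q) \<le> q \<Longrightarrow> himp (inf d A) q \<le> q" and I5: "\<And>h. inf A (F h) \<le> sup B h"
    unfolding KP_def by auto
  have 1: "himp a (F h) \<le> himp a (F h')" if "h \<le> h'" for h h' by (rule h_mono2[OF M[OF that]])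
  have 2: "h \<le> himp a (F h)" for h by (rule order_trans[OF I2 h_up])
  have 3: "B \<le> himp a (F h)" for h by (rule order_trans[OF I3 h_up])
  have 4: "himp (inf d (inf a A)) q \<le> q" if H: "himp a (F (himp d q)) \<le> q" for d q
  proof -
    define q' where "q' = F (himp d q)"
    have qq: "q \<le> q'" unfolding q'_def by (rule order_trans[OF h_up I2])
    have "himp (inf d a) q' \<le> himp d (himp a q')" by (rule h_curry)
    also have "\<dots> \<le> himp d q" using H unfolding q'_def by (rule h_mono2)
    finally have "F (himp (inf d a) q') \<le> q'" unfolding q'_def by (rule M)
    hence IH: "himp (inf (inf d a) A) q' \<le> q'" by (rule I4)
    have "himp (inf d (inf a A)) q \<le> himp (inf (inf d a) A) q'"
      by (simp add: inf_assoc h_mono2[OF qq])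
    also have "\<dots> \<le> q'" by (rule IH)
    finally have X: "himp (inf d (inf a A)) q \<le> q'" .
    have "himp (inf d (inf a A)) q \<le> himp a q'"
      using himp_adj order_trans[OF inf_le1 X] by blast
    also have "\<dots> \<le> q" using H unfolding q'_def .
    finally show ?thesis .
  qed
  have 5: "inf (inf a A) (himp a (F h)) \<le> sup B h" for h
  proof -
    have "inf (inf a A) (himp a (F h)) = inf A (inf a (himp a (F h)))"
      by (simp add: inf_assoc inf_left_commute)
    also have "\<dots> \<le> inf A (F h)" by (rule inf_mono[OF order_refl h_mp])
    also have "\<dots> \<le> sup B h" by (rule I5)
    finally show ?thesis .
  qed
  show ?thesis unfolding KP_def using 1 2 3 4 5 by blast
qed

lemma KP_sideL:
  assumes "KP A B F" shows "KP A (sup b B) (\<lambda>h. sup b (F h))"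
proof -
  from assms have M: "\<And>h h'. h \<le> h' \<Longrightarrow> F h \<le> F h'" and I2: "\<And>h. h \<le> F h"
    and I3: "\<And>h. B \<le> F h" and I4: "\<And>d q. F (himp d q) \<le> q \<Longrightarrow> himp (inf d A) q \<le> q" and I5: "\<And>h. inf A (F h) \<le> sup B h"
    unfolding KP_def by auto
  have 1: "sup b (F h) \<le> sup b (F h')" if "h \<le> h'" for h h' by (rule sup_mono[OF order_refl M[OF that]])
  have 2: "h \<le> sup b (F h)" for h by (rule le_supI2[OF I2])
  have 3: "sup b B \<le> sup b (F h)" for h by (rule sup_mono[OF order_refl I3])
  have 4: "himp (inf d A) q \<le> q" if H: "sup b (F (himp d q)) \<le> q" for d q
  proof -
    have "F (himp d q) \<le> q" using H by simp
    thus ?thesis by (rule I4)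
  qed
  have 5: "inf A (sup b (F h)) \<le> sup (sup b B) h" for h
  proof -
    have "inf A (sup b (F h)) \<le> sup (inf A b) (inf A (F h))" by (rule h_distrib)
    also have "\<dots> \<le> sup b (sup B h)" by (rule sup_mono[OF inf_le2 I5])
    finally show ?thesis by (simp add: sup_assoc)
  qed
  show ?thesis unfolding KP_def using 1 2 3 4 5 by blast
qed

lemma KP_sideR:
  assumes "KP A B F" shows "KP A (sup b B) (\<lambda>h. sup (F h) b)"
  using KP_sideL[OF assms, of b] by (simp add: sup_commute)

lemma KP_or:
  assumes "KP A1 B1 F" "KP A2 B2 G"
  shows "KP (inf A1 A2) (sup B1 B2) (\<lambda>h. sup (F h) (G h))"
proof -
  from assms(1) have M: "\<And>h h'. h \<le> h' \<Longrightarrow> F h \<le> F h'" and I2: "\<And>h. h \<le> F h"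
    and I3: "\<And>h. B1 \<le> F h" and I4: "\<And>d q. F (himp d q) \<le> q \<Longrightarrow> himp (inf d A1) q \<le> q" and I5: "\<And>h. inf A1 (F h) \<le> sup B1 h"
    unfolding KP_def by auto
  from assms(2) have M': "\<And>h h'. h \<le> h' \<Longrightarrow> G h \<le> G h'"
    and I3': "\<And>h. B2 \<le> G h" and I2': "\<And>h. h \<le> G h"
    and I4': "\<And>d q. G (himp d q) \<le> q \<Longrightarrow> himp (inf d A2) q \<le> q" and I5': "\<And>h. inf A2 (G h) \<le> sup B2 h"
    unfolding KP_def by auto
  have 1: "sup (F h) (G h) \<le> sup (F h') (G h')" if "h \<le> h'" for h h'
    by (rule sup_mono[OF M[OF that] M'[OF that]])
  have 2: "h \<le> sup (F h) (G h)" for h by (rule le_supI1[OF I2])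
  have 3: "sup B1 B2 \<le> sup (F h) (G h)" for h by (rule sup_mono[OF I3 I3'])
  have 4: "himp (inf d (inf A1 A2)) q \<le> q" if H: "sup (F (himp d q)) (G (himp d q)) \<le> q" for d q
  proof -
    have "F (himp d q) \<le> q" using H by simp
    hence r: "himp (inf d A1) q \<le> q" by (rule I4)
    have "G (himp (inf d A1) q) \<le> G (himp d q)"
      by (rule M'[OF order_trans[OF r h_up]])
    also have "\<dots> \<le> q" using H by simp
    finally have "himp (inf (inf d A1) A2) q \<le> q" by (rule I4')
    thus ?thesis by (simp add: inf_assoc)
  qed
  have 5: "inf (inf A1 A2) (sup (F h) (G h)) \<le> sup (sup B1 B2) h" for h
  proof -
    have "inf (inf A1 A2) (sup (F h) (G h)) \<le> sup (inf (inf A1 A2) (F h)) (inf (inf A1 A2) (G h))"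
      by (rule h_distrib)
    also have "\<dots> \<le> sup (inf A1 (F h)) (inf A2 (G h))"
      by (rule sup_mono[OF inf_mono[OF inf_le1 order_refl] inf_mono[OF inf_le2 order_refl]])
    also have "\<dots> \<le> sup (sup B1 h) (sup B2 h)" by (rule sup_mono[OF I5 I5'])
    also have "\<dots> = sup (sup B1 B2) h" by (simp add: sup_assoc sup_left_commute)
    finally show ?thesis .
  qed
  show ?thesis unfolding KP_def using 1 2 3 4 5 by blast
qed

lemma key:
  fixes v :: "'v \<Rightarrow> 'h::heyting_algebra"
  assumes "wf_dparse x p"
  shows "KP (eval v (BigConj (head_list p))) (eval v (BigDisj (side_list p)))
            (\<lambda>h. eval (v(x:=h)) (to_fm x p))"
  using assms
proof (induction p)
  case DX
  then show ?case using KP_X by (simp add: BigConj_def BigDisj_def)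
next
  case (DImp a p)
  have e: "\<And>h. eval (v(x:=h)) a = eval v a" using DImp.prems by (simp add: eval_upd)
  have "KP (eval v (BigConj (head_list p))) (eval v (BigDisj (side_list p)))
            (\<lambda>h. eval (v(x:=h)) (to_fm x p))" by (rule DImp.IH) (use DImp.prems in simp)
  from KP_imp[OF this, of "eval v a"] show ?case
    by (simp only: to_fm.simps eval.simps e conj_cons head_list.simps side_list.simps)
next
  case (DSideL b p)
  have e: "\<And>h. eval (v(x:=h)) b = eval v b" using DSideL.prems by (simp add: eval_upd)
  have "KP (eval v (BigConj (head_list p))) (eval v (BigDisj (side_list p)))
            (\<lambda>h. eval (v(x:=h)) (to_fm x p))" by (rule DSideL.IH) (use DSideL.prems in simp)
  from KP_sideL[OF this, of "eval v b"] show ?case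
    by (simp only: to_fm.simps eval.simps e disj_cons head_list.simps side_list.simps)
next
  case (DSideR p b)
  have e: "\<And>h. eval (v(x:=h)) b = eval v b" using DSideR.prems by (simp add: eval_upd)
  have "KP (eval v (BigConj (head_list p))) (eval v (BigDisj (side_list p)))
            (\<lambda>h. eval (v(x:=h)) (to_fm x p))" by (rule DSideR.IH) (use DSideR.prems in simp)
  from KP_sideR[OF this, of "eval v b"] show ?case
    by (simp only: to_fm.simps eval.simps e disj_cons head_list.simps side_list.simps)
next
  case (DOr p q)
  then show ?case using KP_or[OF DOr.IH] by (simp add: conj_app disj_app)
qed

theorem mainTheorem12:
  fixes x :: 'v and \<phi> :: "'v fm" and p :: "'v dparse"
    and v :: "'v \<Rightarrow> 'h::heyting_algebra"
  assumes "disjunctive_in x \<phi> p"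
  defines "f \<equiv> (\<lambda>h. eval (v(x := h)) \<phi>)"
  shows "mono f
    \<and> f (eval v (Imp (BigConj (head_list p)) (BigDisj (side_list p))))
        = eval v (Imp (BigConj (head_list p)) (BigDisj (side_list p)))
    \<and> (\<forall>q. f q = q \<longrightarrow>
          eval v (Imp (BigConj (head_list p)) (BigDisj (side_list p))) \<le> q)"
proof -
  have wf: "wf_dparse x p" and phi: "\<phi> = to_fm x p" using assms(1) by (auto simp: disjunctive_in_def)
  let ?A = "eval v (BigConj (head_list p))" and ?B = "eval v (BigDisj (side_list p))"
  let ?F = "\<lambda>h. eval (v(x:=h)) (to_fm x p)"
  have K: "KP ?A ?B ?F" by (rule key[OF wf])
  have M: "\<And>h h'. h \<le> h' \<Longrightarrow> ?F h \<le> ?F h'" and I2: "\<And>h. h \<le> ?F h"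
    and I3: "\<And>h. ?B \<le> ?F h" and I4: "\<And>d q. ?F (himp d q) \<le> q \<Longrightarrow> himp (inf d ?A) q \<le> q"
    and I5: "\<And>h. inf ?A (?F h) \<le> sup ?B h"
    using K unfolding KP_def by blast+
  have fF: "f h = ?F h" for h by (simp add: f_def phi)
  have m: "mono f" unfolding mono_def fF using M by blast
  let ?c = "himp ?A ?B"
  have ge: "?c \<le> f ?c" unfolding fF by (rule I2)
  have "inf ?A (f ?c) \<le> sup ?B ?c" unfolding fF by (rule I5)
  hence "inf ?A (f ?c) \<le> inf ?A (sup ?B ?c)" by simp
  also have "\<dots> \<le> sup (inf ?A ?B) (inf ?A ?c)" by (rule h_distrib)
  also have "\<dots> \<le> ?B" using h_mp[of ?A ?B] by simp
  finally have "inf (f ?c) ?A \<le> ?B" by (simp add: inf_commute)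
  hence le: "f ?c \<le> ?c" using himp_adj by blast
  have least: "?c \<le> q" if fq: "f q = q" for q
  proof -
    have tq: "himp top q = q"
      using h_up[of q top] h_mp[of top q] by (simp add: antisym)
    have B: "?B \<le> q" using I3[of q] fq unfolding fF by simp
    have "?F (himp top q) \<le> q" using fq unfolding fF tq by simp
    hence "himp (inf top ?A) q \<le> q" by (rule I4)
    hence "himp ?A q \<le> q" by simp
    thus ?thesis using h_mono2[OF B, of ?A] by (rule order_trans[rotated])
  qed
  show ?thesis using m ge le least by (simp add: antisym)
qed

end
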